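(* Consider the system $\dot{x} = \vartheta$, $\dot{\vartheta} = -\lambda \vartheta - x u + x - x^3$, $\dot{u} = -\alpha u - \beta x \vartheta$ with $\lambda \geq 0$, $\alpha > 0$, $\beta > 0$, and assume $\alpha(\sqrt{\lambda^2+4}+\lambda) > 2(\beta-2)$. Let $L > 0$ be a number with $L > \frac{\sqrt{\lambda^2+4}-\lambda}{2}$ and $K = \frac{\beta L}{\alpha + 2L} < 1$, and set $M = 1 - K$. Let $(x^+(t), \vartheta^+(t), u^+(t))$ be the positive outgoing separatrix of the zero saddle equilibrium $(0,0,0)$, i.e. $\lim_{t\to-\infty}(x^+(t),\vartheta^+(t),u^+(t)) = (0,0,0)$ and $x^+(t) > 0$ for all $t \in (-\infty, \tau)$ for some number $\tau$. Suppose that $x^+(t) \geq 0$ for all $t \in (-\infty, \tau]$ and $M > 0$. Then there exists a number $R > 0$ (independent of $\tau$) such that $x^+(t) \leq R$, $|\vartheta^+(t)| \leq R$, $|u^+(t)| \leq R$ for all $t \in (-\infty, \tau]$.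
   Context: The system is a Lorenz-like system obtained from the Lorenz system by a smooth change of variables; its equilibria are $S_0 = (0,0,0)$ (always a saddle for positive parameters) and $S_\pm = (\pm 1, 0, 0)$. The inequality $\alpha(\sqrt{\lambda^2+4}+\lambda) > 2(\beta-2)$ guarantees existence of $L>0$ with $L > \frac{\sqrt{\lambda^2+4}-\lambda}{2}$ and $\frac{\beta L}{\alpha+2L} < 1$. *)

theory Defs
  imports "HOL-Analysis.Analysis"
begin

end

theory Submission
  imports Defs "HOL-Analysis.Analysis"
begin


lemma h_pos: fixes M b :: real assumes "M > 0" "M * b^2 > 2" shows "M*b^4/4 - b^2/2 > 0"
proof -
  have "M*b^4/4 - b^2/2 = b^2 * (M * b^2 - 2) / 4" by (simp add: algebra_simps power4_eq_xxxx power2_eq_square)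
  moreover have "b^2 > 0" using assms by (cases "b = 0") auto
  moreover have "b^2 * (M * b^2 - 2) / 4 > 0" using assms \<open>b^2 > 0\<close> by (intro divide_pos_pos mult_pos_pos) auto
  ultimately show ?thesis by linarith
qed

lemma h_nonpos: fixes M b :: real assumes "M > 0" "M * b^2 \<le> 2" shows "M*b^4/4 - b^2/2 \<le> 0"
proof -
  have "M*b^4/4 - b^2/2 = b^2 * (M * b^2 - 2) / 4" by (simp add: algebra_simps power4_eq_xxxx power2_eq_square)
  moreover have "b^2 * (M * b^2 - 2) \<le> 0" using assms by (intro mult_nonneg_nonpos) auto
  ultimately show ?thesis by simp
qed

lemma h_lower: fixes M y :: real assumes "M > 0" shows "M*y^4/4 - y^2/2 \<ge> - 1/(4*M)"
proof -
  have "M*y^4/4 - y^2/2 + 1/(4*M) = (M * y^2 - 1)^2 / (4 * M)"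
    using assms by (simp add: field_simps power4_eq_xxxx power2_eq_square)
  moreover have "(M * y^2 - 1)^2 / (4 * M) \<ge> 0" using assms by simp
  ultimately show ?thesis by linarith
qed

lemma h_alg: fixes M a b :: real assumes M: "M > 0" and a: "0 \<le> a" "a < b" and b: "M*b^2 > 2"
  and le: "M*b^4/4 - b^2/2 \<le> M*a^4/4 - a^2/2" shows False
proof (cases "M * a^2 \<le> 2")
  case True
  then show False using h_pos[OF M b] h_nonpos[OF M True] le by linarith
next
  case False
  have d: "(M*b^4/4 - b^2/2) - (M*a^4/4 - a^2/2) = (b^2 - a^2) * (M * (a^2 + b^2) - 2) / 4"
    by (simp add: algebra_simps power4_eq_xxxx power2_eq_square)
  have "a^2 < b^2" using a by (intro power_strict_mono) auto
  moreover have "M * (a^2 + b^2) - 2 > 0" using False b by (simp add: algebra_simps)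
  ultimately have "(b^2 - a^2) * (M * (a^2 + b^2) - 2) / 4 > 0" by (intro divide_pos_pos mult_pos_pos) auto
  then show False using d le by linarith
qed



lemma lim_dec:
  fixes f f' :: "real \<Rightarrow> real"
  assumes d: "\<And>t. t \<le> b \<Longrightarrow> (f has_real_derivative f' t) (at t)"
    and n: "\<And>t. t \<le> b \<Longrightarrow> f' t \<le> 0"
    and l: "(f \<longlongrightarrow> l) at_bot"
  shows "f b \<le> l"
proof -
  have "\<forall>a\<le>b. f b \<le> f a"
  proof (intro allI impI)
    fix a assume "a \<le> b"
    then show "f b \<le> f a"
      by (rule DERIV_nonpos_imp_nonincreasing) (use d n in auto)
  qed
  then have "eventually (\<lambda>a. f b \<le> f a) at_bot"
    unfolding eventually_at_bot_linorder by blast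
  then show ?thesis
    using tendsto_lowerbound[OF l] by auto
qed

lemma lim_inc:
  fixes f f' :: "real \<Rightarrow> real"
  assumes d: "\<And>t. t \<le> b \<Longrightarrow> (f has_real_derivative f' t) (at t)"
    and n: "\<And>t. t \<le> b \<Longrightarrow> f' t \<ge> 0"
    and l: "(f \<longlongrightarrow> l) at_bot"
  shows "l \<le> f b"
proof -
  have "(- f b) \<le> - l"
    by (rule lim_dec[of b "\<lambda>t. - f t" "\<lambda>t. - f' t"])
       (use d n l in \<open>auto intro: DERIV_minus tendsto_minus\<close>)
  then show ?thesis by simp
qed

lemma exp_lim:
  fixes c :: real assumes "c > 0"
  shows "((\<lambda>t. exp (c * t)) \<longlongrightarrow> 0) at_bot"
proof -
  have "filterlim (\<lambda>t. c * t) at_bot at_bot"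
    using assms by (intro filterlim_tendsto_pos_mult_at_bot) (auto intro: filterlim_ident)
  then show ?thesis using exp_at_bot filterlim_compose by blast
qed

lemma zero_before:
  fixes g :: "real \<Rightarrow> real"
  assumes cont: "\<And>r. r \<le> t \<Longrightarrow> isCont g r" and pos: "g t > 0"
  shows "(\<forall>r\<le>t. g r > 0) \<or> (\<exists>t3<t. g t3 = 0 \<and> (\<forall>r. t3 < r \<and> r \<le> t \<longrightarrow> g r > 0))"
proof (cases "\<forall>r\<le>t. g r > 0")
  case True then show ?thesis by blast
next
  case False
  then obtain r where r: "r \<le> t" "g r \<le> 0" by force
  have co: "\<And>a. a \<le> t \<Longrightarrow> continuous_on {a..t} g"
    using cont by (intro continuous_at_imp_continuous_on) auto
  define S where "S = {z \<in> {..t}. g z = 0}"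
  have "continuous_on {..t} g" using cont by (intro continuous_at_imp_continuous_on) auto
  then have cl: "closed S" unfolding S_def by (intro continuous_closed_preimage_constant) auto
  obtain z where z: "r \<le> z" "z \<le> t" "g z = 0" using IVT'[of g r 0 t] r pos co[OF r(1)] by auto
  then have ne: "S \<noteq> {}" unfolding S_def by auto
  have bd: "bdd_above S" unfolding S_def by (auto intro: bdd_aboveI[of _ t])
  define t3 where "t3 = Sup S"
  have t3S: "t3 \<in> S" unfolding t3_def using closed_contains_Sup[OF ne bd cl] .
  then have "t3 \<le> t" "g t3 = 0" unfolding S_def by auto
  then have lt: "t3 < t" using pos by (cases "t3 = t") auto
  have "\<forall>r. t3 < r \<and> r \<le> t \<longrightarrow> g r > 0"
  proof (intro allI impI)
    fix r assume rr: "t3 < r \<and> r \<le> t"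
    show "g r > 0"
    proof (rule ccontr)
      assume "\<not> g r > 0"
      then obtain z where z: "r \<le> z" "z \<le> t" "g z = 0" using IVT'[of g r 0 t] rr pos co[of r] by auto
      then have "z \<in> S" unfolding S_def by auto
      then have "z \<le> t3" unfolding t3_def using bd by (rule cSup_upper)
      then show False using z rr by auto
    qed
  qed
  then show ?thesis using lt \<open>g t3 = 0\<close> by blast
qed



lemma cone:
  fixes lam alpha beta L K M \<tau> :: real and x th u :: "real \<Rightarrow> real"
  assumes lam_nn: "lam \<ge> 0" and alpha_pos: "alpha > 0" and beta_pos: "beta > 0"
    and L_pos: "L > 0" and L_gt: "L > (sqrt (lam\<^sup>2 + 4) - lam) / 2"
    and K_def: "K = beta * L / (alpha + 2 * L)"
    and M_def: "M = 1 - K" and M_pos: "M > 0"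
    and lim_x: "(x \<longlongrightarrow> 0) at_bot"
    and lim_th: "(th \<longlongrightarrow> 0) at_bot"
    and lim_u: "(u \<longlongrightarrow> 0) at_bot"
    and dx: "\<And>t. t \<le> \<tau> \<Longrightarrow> (x has_real_derivative th t) (at t)"
    and dth: "\<And>t. t \<le> \<tau> \<Longrightarrow> (th has_real_derivative (- lam * th t - x t * u t + x t - x t ^ 3)) (at t)"
    and du: "\<And>t. t \<le> \<tau> \<Longrightarrow> (u has_real_derivative (- alpha * u t - beta * x t * th t)) (at t)"
    and xpos: "\<And>t. t < \<tau> \<Longrightarrow> x t > 0" and xnn: "\<And>t. t \<le> \<tau> \<Longrightarrow> x t \<ge> 0"
  shows "\<forall>t\<le>\<tau>. th t \<le> L * x t \<and> u t + K * x t ^ 2 \<ge> 0"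
proof -
  define a where "a = L^2 + lam * L - 1"
  define c where "c = lam + L"
  define s where "s = (\<lambda>t. th t - L * x t)"
  define q where "q = (\<lambda>t. u t + K * x t ^ 2)"
  have c_pos: "c > 0" using lam_nn L_pos c_def by simp
  have a_pos: "a > 0"
  proof -
    have "sqrt (lam\<^sup>2 + 4) < 2 * L + lam" using L_gt by simp
    then have "(sqrt (lam\<^sup>2 + 4))^2 < (2 * L + lam)^2"
      by (intro power_strict_mono) auto
    then have "lam\<^sup>2 + 4 < (2 * L + lam)^2" by simp
    then show ?thesis unfolding a_def by (simp add: power2_eq_square algebra_simps)
  qed
  have Kfac: "alpha * K / L = beta - 2 * K"
  proof -
    define D where "D = alpha + 2 * L"
    have D: "D > 0" using L_pos alpha_pos D_def by simp
    have 1: "alpha * K / L = alpha * beta / D" using L_pos unfolding K_def D_def[symmetric] by simp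
    have 2: "beta - 2 * K = alpha * beta / D" using D unfolding K_def D_def[symmetric]
      by (simp add: field_simps D_def)
    show ?thesis using 1 2 by simp
  qed
  have ds: "(s has_real_derivative (- c * s t - x t * (a + q t + M * x t ^ 2))) (at t)" if "t \<le> \<tau>" for t
  proof -
    have "(s has_real_derivative ((- lam * th t - x t * u t + x t - x t ^ 3) - L * th t)) (at t)"
      unfolding s_def using dx[OF that] dth[OF that] by (auto intro!: derivative_eq_intros)
    moreover have "(- lam * th t - x t * u t + x t - x t ^ 3) - L * th t = - c * s t - x t * (a + q t + M * x t ^ 2)"
      unfolding c_def s_def a_def q_def M_def by (simp add: algebra_simps power2_eq_square power3_eq_cube)
    ultimately show ?thesis by simp
  qed
  have dq: "(q has_real_derivative (- alpha * q t - alpha * K / L * x t * s t)) (at t)" if "t \<le> \<tau>" for t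
  proof -
    have "(q has_real_derivative ((- alpha * u t - beta * x t * th t) + K * (2 * x t * th t))) (at t)"
      unfolding q_def using dx[OF that] du[OF that] by (auto intro!: derivative_eq_intros)
    moreover have "(- alpha * u t - beta * x t * th t) + K * (2 * x t * th t) = - alpha * q t - alpha * K / L * x t * s t"
    proof -
      have Krel: "K * (alpha + 2 * L) = beta * L"
        using L_pos alpha_pos unfolding K_def by (simp add: field_simps)
      have e: "K * alpha = beta * L - 2 * K * L" using Krel by (simp add: algebra_simps)
      have k2: "alpha * K / L = beta - 2 * K" using L_pos e by (simp add: field_simps)
      have r: "(- alpha * u t - beta * x t * th t) + K * (2 * x t * th t) = - alpha * q t - (beta - 2 * K) * x t * s t"
      proof -
        have h: "K * (alpha + 2 * L) * (x t * x t) = beta * L * (x t * x t)" using Krel by simp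
        show ?thesis unfolding q_def s_def using h by (simp add: algebra_simps power2_eq_square)
      qed
      show ?thesis using r k2 by metis
    qed
    ultimately show ?thesis by simp
  qed
  have K_nn: "K \<ge> 0" using K_def alpha_pos beta_pos L_pos by simp
  have qlim: "(q \<longlongrightarrow> 0) at_bot" unfolding q_def using lim_u lim_x by (auto intro!: tendsto_eq_intros)
  have slim: "(s \<longlongrightarrow> 0) at_bot" unfolding s_def using lim_th lim_x by (auto intro!: tendsto_eq_intros)
  have "eventually (\<lambda>t. q t > -a) at_bot" using qlim a_pos by (intro order_tendstoD(1)) auto
  then obtain T where T: "\<And>t. t \<le> T \<Longrightarrow> q t > -a" unfolding eventually_at_bot_linorder by blast
  define T0 where "T0 = min T \<tau>"
  have T0: "T0 \<le> \<tau>" "\<And>t. t \<le> T0 \<Longrightarrow> a + q t > 0" using T unfolding T0_def by force+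
  have s_early: "s t \<le> 0" if "t \<le> T0" for t
  proof -
    have "exp (c * t) * s t \<le> 0"
    proof (rule lim_dec[where f = "\<lambda>r. exp (c * r) * s r" and f' = "\<lambda>r. exp (c * r) * (- x r * (a + q r + M * x r ^ 2))"])
      fix r assume r: "r \<le> t"
      then have rt: "r \<le> \<tau>" using that T0 by linarith
      have "((\<lambda>r. exp (c * r) * s r) has_real_derivative
          (exp (c * r) * c * s r + exp (c * r) * (- c * s r - x r * (a + q r + M * x r ^ 2)))) (at r)"
        using ds[OF rt] by (auto intro!: derivative_eq_intros)
      then show "((\<lambda>r. exp (c * r) * s r) has_real_derivative
          (exp (c * r) * (- x r * (a + q r + M * x r ^ 2)))) (at r)"
        by (simp add: algebra_simps)
      have "x r * (a + q r + M * x r ^ 2) \<ge> 0"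
        using xnn[OF rt] T0(2)[of r] r that M_pos by (intro mult_nonneg_nonneg) auto
      then show "exp (c * r) * (- x r * (a + q r + M * x r ^ 2)) \<le> 0"
        by (simp add: mult_nonneg_nonneg)
    next
      show "((\<lambda>r. exp (c * r) * s r) \<longlongrightarrow> 0) at_bot"
        using tendsto_mult[OF exp_lim[OF c_pos] slim] by simp
    qed
    then show ?thesis by (simp add: mult_le_0_iff)
  qed
  have q_nn: "q t \<ge> 0" if b: "b \<le> \<tau>" "\<And>r. r \<le> b \<Longrightarrow> s r \<le> 0" "t \<le> b" for b t
  proof -
    have "0 \<le> exp (alpha * t) * q t"
    proof (rule lim_inc[where f = "\<lambda>r. exp (alpha * r) * q r" and f' = "\<lambda>r. exp (alpha * r) * (- alpha * K / L * x r * s r)"])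
      fix r assume r: "r \<le> t"
      then have rt: "r \<le> \<tau>" "r \<le> b" using b by linarith+
      have "((\<lambda>r. exp (alpha * r) * q r) has_real_derivative
          (exp (alpha * r) * alpha * q r + exp (alpha * r) * (- alpha * q r - alpha * K / L * x r * s r))) (at r)"
        using dq[OF rt(1)] by (auto intro!: derivative_eq_intros)
      then show "((\<lambda>r. exp (alpha * r) * q r) has_real_derivative
          (exp (alpha * r) * (- alpha * K / L * x r * s r))) (at r)"
        by (simp add: algebra_simps)
      have "alpha * K / L * x r * (- s r) \<ge> 0"
        using xnn[OF rt(1)] b(2)[OF rt(2)] K_nn alpha_pos L_pos by (intro mult_nonneg_nonneg) auto
      then show "exp (alpha * r) * (- alpha * K / L * x r * s r) \<ge> 0"
      proof -
        have "alpha * K * x r * s r \<le> 0"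
          using xnn[OF rt(1)] b(2)[OF rt(2)] K_nn alpha_pos by (intro mult_nonneg_nonpos) auto
        then have "exp (alpha * r) * (alpha * K * x r * s r) \<le> 0" by (simp add: mult_nonneg_nonpos)
        then have "exp (alpha * r) * (alpha * K * x r * s r) / L \<le> 0" using L_pos by (simp add: divide_nonpos_pos)
        then show ?thesis by simp
      qed
    next
      show "((\<lambda>r. exp (alpha * r) * q r) \<longlongrightarrow> 0) at_bot"
        using tendsto_mult[OF exp_lim[OF alpha_pos] qlim] by simp
    qed
    then show ?thesis by (simp add: zero_le_mult_iff)
  qed
  have sc: "isCont s r" if "r \<le> \<tau>" for r using ds[OF that] by (rule DERIV_isCont)
  have s_all: "s t \<le> 0" if tt: "t \<le> \<tau>" for t
  proof (rule ccontr)
    assume nt: "\<not> s t \<le> 0"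
    define P where "P = {r. r \<le> \<tau> \<and> s r > 0}"
    have tP: "t \<in> P" using nt tt unfolding P_def by auto
    have PT0: "T0 < r" if "r \<in> P" for r
      using that s_early[of r] unfolding P_def by (cases "r \<le> T0") auto
    have Pbd: "bdd_below P" using PT0 by (auto intro!: bdd_belowI[of _ T0] less_imp_le)
    have Pne: "P \<noteq> {}" using tP by auto
    define t0 where "t0 = Inf P"
    have T0t0: "T0 \<le> t0" unfolding t0_def using Pne PT0 by (intro cInf_greatest) (auto intro: less_imp_le)
    have t0t: "t0 \<le> t" unfolding t0_def using tP Pbd by (rule cInf_lower)
    have before: "s r \<le> 0" if "r < t0" for r
    proof (rule ccontr)
      assume "\<not> s r \<le> 0"
      then have "r \<in> P" using that t0t tt unfolding P_def by auto
      then have "t0 \<le> r" unfolding t0_def using Pbd by (intro cInf_lower)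
      then show False using that by simp
    qed
    have st0: "s t0 \<le> 0"
    proof -
      have "(s \<longlongrightarrow> s t0) (at t0)" using sc[of t0] t0t tt by (simp add: isCont_def)
      then have "(s \<longlongrightarrow> s t0) (at_left t0)" by (rule tendsto_mono[OF at_within_le_at])
      moreover have "eventually (\<lambda>r. s r \<le> 0) (at_left t0)"
        using eventually_at_left_real[of "t0 - 1" t0] by (rule eventually_mono) (auto intro: before)
      ultimately show ?thesis by (rule tendsto_upperbound) (simp add: trivial_limit_at_left_real)
    qed
    have t0tau: "t0 < \<tau>"
    proof (rule ccontr)
      assume "\<not> t0 < \<tau>"
      then have "t = t0" using t0t tt by simp
      then show False using nt st0 by simp
    qed
    have qt0: "q t0 \<ge> 0"
      using t0tau before st0 by (intro q_nn[of t0 t0]) (auto simp: le_less)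
    have ev: "eventually (\<lambda>r. s r \<le> 0) (at_right t0)"
    proof (cases "s t0 < 0")
      case True
      have "(s \<longlongrightarrow> s t0) (at t0)" using sc[of t0] t0tau by (simp add: isCont_def)
      then have "(s \<longlongrightarrow> s t0) (at_right t0)" by (rule tendsto_mono[OF at_within_le_at])
      then have "eventually (\<lambda>r. s r < 0) (at_right t0)" using True by (rule order_tendstoD(2))
      then show ?thesis by (rule eventually_mono) simp
    next
      case False
      then have s0: "s t0 = 0" using st0 by simp
      have D: "- c * s t0 - x t0 * (a + q t0 + M * x t0 ^ 2) < 0"
        using s0 xpos[OF t0tau] a_pos qt0 M_pos
        by (simp add: add_pos_nonneg mult_pos_pos)
      obtain d where d: "d > 0" "\<And>h. h > 0 \<Longrightarrow> h < d \<Longrightarrow> s t0 > s (t0 + h)"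
        using DERIV_neg_dec_right[OF ds[of t0] D] t0tau by auto
      show ?thesis unfolding eventually_at_right_field
      proof (intro exI[of _ "t0 + d"] conjI allI impI)
        show "t0 < t0 + d" using d by simp
        fix y assume "t0 < y" "y < t0 + d"
        then show "s y \<le> 0" using d(2)[of "y - t0"] s0 by simp
      qed
    qed
    then obtain bb where bb: "bb > t0" "\<And>y. y > t0 \<Longrightarrow> y < bb \<Longrightarrow> s y \<le> 0"
      unfolding eventually_at_right_field by blast
    have "Inf P < bb" using bb unfolding t0_def by simp
    then obtain r where r: "r \<in> P" "r < bb" using cInf_less_iff[OF Pne Pbd] by auto
    have "t0 \<le> r" unfolding t0_def using r(1) Pbd by (rule cInf_lower)
    moreover have "s r > 0" using r(1) unfolding P_def by simp
    ultimately show False using bb st0 r(2) by (cases "r = t0") force+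
  qed
  show ?thesis
  proof (intro allI impI conjI)
    fix t assume "t \<le> \<tau>"
    then show "th t \<le> L * x t" using s_all[of t] unfolding s_def by simp
    show "u t + K * x t ^ 2 \<ge> 0" using q_nn[of \<tau> t] s_all \<open>t \<le> \<tau>\<close> unfolding q_def by auto
  qed
qed

lemma bounds:
  fixes lam alpha beta L K M \<tau> :: real and x th u :: "real \<Rightarrow> real"
  assumes lam_nn: "lam \<ge> 0" and alpha_pos: "alpha > 0" and beta_pos: "beta > 0"
    and L_pos: "L > 0" and L_gt: "L > (sqrt (lam\<^sup>2 + 4) - lam) / 2"
    and K_def: "K = beta * L / (alpha + 2 * L)"
    and M_def: "M = 1 - K" and M_pos: "M > 0"
    and lim_x: "(x \<longlongrightarrow> 0) at_bot"
    and lim_th: "(th \<longlongrightarrow> 0) at_bot"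
    and lim_u: "(u \<longlongrightarrow> 0) at_bot"
    and dx: "\<And>t. t \<le> \<tau> \<Longrightarrow> (x has_real_derivative th t) (at t)"
    and dth: "\<And>t. t \<le> \<tau> \<Longrightarrow> (th has_real_derivative (- lam * th t - x t * u t + x t - x t ^ 3)) (at t)"
    and du: "\<And>t. t \<le> \<tau> \<Longrightarrow> (u has_real_derivative (- alpha * u t - beta * x t * th t)) (at t)"
    and xpos: "\<And>t. t < \<tau> \<Longrightarrow> x t > 0" and xnn: "\<And>t. t \<le> \<tau> \<Longrightarrow> x t \<ge> 0"
  shows "\<forall>t\<le>\<tau>. x t \<le> sqrt (2/M) \<and> th t \<le> L * sqrt (2/M)
     \<and> \<bar>u t\<bar> \<le> (beta/2 + K) * (2/M) \<and> th t \<ge> - (1 + (2 * (2/M) * ((beta/2 + K) * (2/M)) + 1/(2*M)))"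
proof -
  have cn: "\<forall>t\<le>\<tau>. th t \<le> L * x t \<and> u t + K * x t ^ 2 \<ge> 0"
    by (rule cone[OF assms])
  define X where "X = sqrt (2/M)"
  define Q where "Q = (beta/2 + K) * (2/M)"
  define q where "q = (\<lambda>t. u t + K * x t ^ 2)"
  define h where "h = (\<lambda>y::real. M * y^4/4 - y^2/2)"
  define Phi where "Phi = (\<lambda>t. th t ^ 2 / 2 + h (x t))"
  have K_nn: "K \<ge> 0" using K_def alpha_pos beta_pos L_pos by simp
  have X_pos: "X > 0" using M_pos X_def by simp
  have X2: "X^2 = 2/M" using M_pos X_def by simp
  have q_nn: "q t \<ge> 0" if "t \<le> \<tau>" for t using cn that q_def by auto
  have dPhi: "(Phi has_real_derivative (- lam * th t ^ 2 - x t * q t * th t)) (at t)" if "t \<le> \<tau>" for t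
  proof -
    have "(Phi has_real_derivative (th t * (- lam * th t - x t * u t + x t - x t ^ 3) + (M * x t ^ 3 * th t - x t * th t))) (at t)"
      unfolding Phi_def h_def using dx[OF that] dth[OF that] by (auto intro!: derivative_eq_intros simp: field_simps)
    moreover have "th t * (- lam * th t - x t * u t + x t - x t ^ 3) + (M * x t ^ 3 * th t - x t * th t) = - lam * th t ^ 2 - x t * q t * th t"
      unfolding q_def M_def by (simp add: algebra_simps power2_eq_square power3_eq_cube)
    ultimately show ?thesis by simp
  qed
  have Phi_lim: "(Phi \<longlongrightarrow> 0) at_bot" unfolding Phi_def h_def using lim_th lim_x by (auto intro!: tendsto_eq_intros)
  have Phi_dec: "- lam * th t ^ 2 - x t * q t * th t \<le> 0" if "t \<le> \<tau>" "th t \<ge> 0" for t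
  proof -
    have "x t * q t * th t \<ge> 0" using xnn[OF that(1)] q_nn[OF that(1)] that(2) by simp
    moreover have "lam * th t ^ 2 \<ge> 0" using lam_nn by simp
    ultimately show ?thesis by simp
  qed
  have xc: "isCont x r" if "r \<le> \<tau>" for r using dx[OF that] by (rule DERIV_isCont)
  have thc: "isCont th r" if "r \<le> \<tau>" for r using dth[OF that] by (rule DERIV_isCont)
  have hX: "M * y^2 > 2" if "y > X" for y
  proof -
    have "X^2 < y^2" using that X_pos by (intro power_strict_mono) auto
    then show ?thesis using X2 M_pos by (simp add: field_simps)
  qed
  have x_bound: "x t \<le> X" if tt: "t \<le> \<tau>" for t
  proof (rule ccontr)
    assume "\<not> x t \<le> X"
    then have xt: "x t - X > 0" by simp
    have "(\<forall>r\<le>t. x r - X > 0) \<or> (\<exists>t0<t. x t0 - X = 0 \<and> (\<forall>r. t0 < r \<and> r \<le> t \<longrightarrow> x r - X > 0))"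
      using tt xc by (intro zero_before xt) (auto intro!: continuous_intros)
    then show False
    proof
      assume all: "\<forall>r\<le>t. x r - X > 0"
      have "eventually (\<lambda>r. x r < X) at_bot" using lim_x X_pos by (intro order_tendstoD(2)) auto
      then obtain T where "\<And>r. r \<le> T \<Longrightarrow> x r < X" unfolding eventually_at_bot_linorder by blast
      then have "x (min T t) < X" by simp
      then show False using all[rule_format, of "min T t"] by simp
    next
      assume "\<exists>t0<t. x t0 - X = 0 \<and> (\<forall>r. t0 < r \<and> r \<le> t \<longrightarrow> x r - X > 0)"
      then obtain t0 where t0: "t0 < t" "x t0 = X" "\<And>r. t0 < r \<Longrightarrow> r \<le> t \<Longrightarrow> x r > X" by auto
      obtain z where z: "t0 < z" "z < t" "x t - x t0 = (t - t0) * th z"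
        using MVT2[of t0 t x th] t0(1) dx tt by auto
      have thz: "th z > 0" using z(3) xt t0 by (simp add: zero_less_mult_iff)
      have xz: "x z > X" using t0(3)[of z] z by simp
      have zt: "z \<le> \<tau>" using z tt by simp
      have "(\<forall>r\<le>z. th r > 0) \<or> (\<exists>t3<z. th t3 = 0 \<and> (\<forall>r. t3 < r \<and> r \<le> z \<longrightarrow> th r > 0))"
        using zt thc by (intro zero_before thz) auto
      then show False
      proof
        assume all: "\<forall>r\<le>z. th r > 0"
        have "Phi z \<le> 0"
          by (rule lim_dec[where f = Phi and f' = "\<lambda>t. - lam * th t ^ 2 - x t * q t * th t"])
             (use dPhi Phi_dec all zt Phi_lim in \<open>auto simp: less_imp_le\<close>)
        moreover have "th z ^ 2 / 2 \<ge> 0" by simp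
        ultimately have "h (x z) \<le> 0" unfolding Phi_def by linarith
        then show False using h_pos[OF M_pos hX[OF xz]] unfolding h_def by simp
      next
        assume "\<exists>t3<z. th t3 = 0 \<and> (\<forall>r. t3 < r \<and> r \<le> z \<longrightarrow> th r > 0)"
        then obtain t3 where t3: "t3 < z" "th t3 = 0" "\<And>r. t3 < r \<Longrightarrow> r \<le> z \<Longrightarrow> th r > 0" by auto
        have thnn: "th r \<ge> 0" if "t3 \<le> r" "r \<le> z" for r
          using t3 that by (cases "r = t3") (auto intro: less_imp_le)
        have "Phi z \<le> Phi t3"
        proof (rule DERIV_nonpos_imp_nonincreasing[of t3 z Phi])
          show "t3 \<le> z" using t3 by simp
          fix r assume "t3 \<le> r" "r \<le> z"
          then show "\<exists>y. DERIV Phi r :> y \<and> y \<le> 0"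
            using dPhi Phi_dec thnn zt by (intro exI[of _ "- lam * th r ^ 2 - x r * q r * th r"]) auto
        qed
        moreover have "th z ^ 2 / 2 \<ge> 0" by simp
        moreover have "Phi t3 = h (x t3)" unfolding Phi_def using t3(2) by simp
        ultimately have le: "h (x z) \<le> h (x t3)" unfolding Phi_def by linarith
        obtain z' where z': "t3 < z'" "z' < z" "x z - x t3 = (z - t3) * th z'"
          using MVT2[of t3 z x th] t3(1) dx zt by auto
        have "th z' > 0" using t3(3)[of z'] z' by simp
        then have "(z - t3) * th z' > 0" using z' by (intro mult_pos_pos) auto
        then have "x t3 < x z" using z'(3) by linarith
        moreover have "x t3 \<ge> 0" using xnn t3 zt by simp
        ultimately show False using h_alg[OF M_pos _ _ hX[OF xz]] le unfolding h_def by blast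
      qed
    qed
  qed
  have xX2: "x t ^ 2 \<le> X ^ 2" if "t \<le> \<tau>" for t
    using x_bound[OF that] xnn[OF that] by (intro power_mono) auto
  have u_up: "u t \<le> beta / 2 * X ^ 2" if tt: "t \<le> \<tau>" for t
  proof -
    have "exp (alpha * t) * (u t + beta / 2 * x t ^ 2 - beta / 2 * X ^ 2) \<le> 0"
    proof (rule lim_dec[where f = "\<lambda>r. exp (alpha * r) * (u r + beta / 2 * x r ^ 2 - beta / 2 * X ^ 2)"
        and f' = "\<lambda>r. exp (alpha * r) * (alpha * beta / 2 * (x r ^ 2 - X ^ 2))"])
      fix r assume r: "r \<le> t"
      then have rt: "r \<le> \<tau>" using tt by simp
      show "((\<lambda>r. exp (alpha * r) * (u r + beta / 2 * x r ^ 2 - beta / 2 * X ^ 2)) has_real_derivative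
          exp (alpha * r) * (alpha * beta / 2 * (x r ^ 2 - X ^ 2))) (at r)"
        using dx[OF rt] du[OF rt] by (auto intro!: derivative_eq_intros simp: field_simps power2_eq_square)
      have "alpha * beta / 2 * (x r ^ 2 - X ^ 2) \<le> 0"
        using xX2[OF rt] alpha_pos beta_pos by (intro mult_nonneg_nonpos) auto
      then show "exp (alpha * r) * (alpha * beta / 2 * (x r ^ 2 - X ^ 2)) \<le> 0"
        by (simp add: mult_nonneg_nonpos)
    next
      have "((\<lambda>r. u r + beta / 2 * x r ^ 2 - beta / 2 * X ^ 2) \<longlongrightarrow> 0 + beta / 2 * 0 ^ 2 - beta / 2 * X ^ 2) at_bot"
        using lim_u lim_x by (intro tendsto_intros) auto
      from tendsto_mult[OF exp_lim[OF alpha_pos] this]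
      show "((\<lambda>r. exp (alpha * r) * (u r + beta / 2 * x r ^ 2 - beta / 2 * X ^ 2)) \<longlongrightarrow> 0) at_bot"
        by simp
    qed
    then have "u t + beta / 2 * x t ^ 2 - beta / 2 * X ^ 2 \<le> 0" by (simp add: mult_le_0_iff)
    moreover have "beta / 2 * x t ^ 2 \<ge> 0" using beta_pos by simp
    ultimately show ?thesis by linarith
  qed
  have QX: "Q = (beta / 2 + K) * X^2" unfolding Q_def X2 ..
  have Q_nn: "Q \<ge> 0" using QX beta_pos K_nn by simp
  have u_lo: "u t \<ge> - K * X ^ 2" if "t \<le> \<tau>" for t
  proof -
    have "K * x t ^ 2 \<le> K * X ^ 2" using xX2[OF that] K_nn by (rule mult_left_mono)
    then show ?thesis using cn that by force
  qed
  have u_abs: "\<bar>u t\<bar> \<le> Q" if "t \<le> \<tau>" for t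
  proof -
    have "K * X^2 \<ge> 0" "beta * X^2 \<ge> 0" using K_nn beta_pos by auto
    then show ?thesis using u_up[OF that] u_lo[OF that] QX by (auto simp: abs_le_iff algebra_simps)
  qed
  have q_le: "q t \<le> Q" if "t \<le> \<tau>" for t
  proof -
    have "K * x t ^ 2 \<le> K * X ^ 2" using xX2[OF that] K_nn by (rule mult_left_mono)
    then show ?thesis using u_up[OF that] QX unfolding q_def by (simp add: algebra_simps)
  qed
  have xq: "x t * q t \<le> X * Q" if "t \<le> \<tau>" for t
    using x_bound[OF that] q_le[OF that] q_nn[OF that] X_pos by (intro mult_mono) auto
  define Psi where "Psi = (\<lambda>r. Phi r + X * Q * x r)"
  have dPsi: "(Psi has_real_derivative (- lam * th t ^ 2 - x t * q t * th t + X * Q * th t)) (at t)"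
    if "t \<le> \<tau>" for t
    unfolding Psi_def using dPhi[OF that] dx[OF that] by (auto intro!: derivative_eq_intros)
  have Psi_dec: "- lam * th t ^ 2 - x t * q t * th t + X * Q * th t \<le> 0" if "t \<le> \<tau>" "th t \<le> 0" for t
  proof -
    have "th t * (X * Q - x t * q t) \<le> 0" using that xq[OF that(1)] by (intro mult_nonpos_nonneg) auto
    moreover have "lam * th t ^ 2 \<ge> 0" using lam_nn by simp
    ultimately show ?thesis by (simp add: algebra_simps)
  qed
  have Psi_lim: "(Psi \<longlongrightarrow> 0) at_bot"
    unfolding Psi_def using tendsto_add[OF Phi_lim tendsto_mult[OF tendsto_const lim_x, of "X * Q"]] by simp
  have hx_nonpos: "h (x t) \<le> 0" if "t \<le> \<tau>" for t
  proof -
    have "M * x t ^ 2 \<le> M * X ^ 2" using xX2[OF that] M_pos by simp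
    then show ?thesis unfolding h_def using h_nonpos[OF M_pos] X2 M_pos by simp
  qed
  have Phi_bd: "Phi t \<le> X^2 * Q" if tt: "t \<le> \<tau>" and tneg: "th t < 0" for t
  proof -
    have xQ: "X * Q * x t \<ge> 0" using X_pos Q_nn xnn[OF tt] by simp
    have "(\<forall>r\<le>t. - th r > 0) \<or> (\<exists>t3<t. - th t3 = 0 \<and> (\<forall>r. t3 < r \<and> r \<le> t \<longrightarrow> - th r > 0))"
      using tt thc tneg by (intro zero_before) (auto intro!: continuous_intros)
    then show ?thesis
    proof
      assume all: "\<forall>r\<le>t. - th r > 0"
      have "Psi t \<le> 0"
        by (rule lim_dec[where f = Psi and f' = "\<lambda>t. - lam * th t ^ 2 - x t * q t * th t + X * Q * th t"])
           (use dPsi Psi_dec all tt Psi_lim in \<open>auto simp: less_imp_le\<close>)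
      moreover have "X^2 * Q \<ge> 0" using Q_nn by simp
      ultimately show ?thesis using xQ unfolding Psi_def by linarith
    next
      assume "\<exists>t3<t. - th t3 = 0 \<and> (\<forall>r. t3 < r \<and> r \<le> t \<longrightarrow> - th r > 0)"
      then obtain t3 where t3: "t3 < t" "th t3 = 0" "\<And>r. t3 < r \<Longrightarrow> r \<le> t \<Longrightarrow> th r < 0" by force
      have thnp: "th r \<le> 0" if "t3 \<le> r" "r \<le> t" for r
        using t3 that by (cases "r = t3") (auto intro: less_imp_le)
      have "Psi t \<le> Psi t3"
      proof (rule DERIV_nonpos_imp_nonincreasing[of t3 t Psi])
        show "t3 \<le> t" using t3 by simp
        fix r assume "t3 \<le> r" "r \<le> t"
        then show "\<exists>y. DERIV Psi r :> y \<and> y \<le> 0"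
          using dPsi Psi_dec thnp tt by (intro exI[of _ "- lam * th r ^ 2 - x r * q r * th r + X * Q * th r"]) auto
      qed
      moreover have "Psi t3 \<le> X^2 * Q"
      proof -
        have t3t: "t3 \<le> \<tau>" using t3 tt by simp
        have "X * Q * x t3 \<le> X * Q * X" using x_bound[OF t3t] X_pos Q_nn by (intro mult_left_mono) auto
        then show ?thesis unfolding Psi_def Phi_def using t3(2) hx_nonpos[OF t3t] by (simp add: power2_eq_square algebra_simps)
      qed
      ultimately show ?thesis using xQ unfolding Psi_def by simp
    qed
  qed
  have th_lo: "th t \<ge> - (1 + (2 * X^2 * Q + 1/(2*M)))" if tt: "t \<le> \<tau>" for t
  proof (cases "th t < 0")
    case False
    have "2 * X^2 * Q \<ge> 0" "1/(2*M) \<ge> 0" using M_pos Q_nn by auto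
    then show ?thesis using False by linarith
  next
    case True
    have "th t ^ 2 / 2 + h (x t) \<le> X^2 * Q" using Phi_bd[OF tt True] unfolding Phi_def .
    moreover have "h (x t) \<ge> - 1/(4*M)" unfolding h_def using h_lower[OF M_pos] by simp
    ultimately have "th t ^ 2 \<le> 2 * X^2 * Q + 1/(2*M)" by (simp add: field_simps)
    moreover have "- th t \<le> 1 + th t ^ 2"
    proof -
      have "0 \<le> (th t + 1/2)^2" by simp
      then show ?thesis by (simp add: power2_eq_square algebra_simps)
    qed
    ultimately show ?thesis by linarith
  qed
  show ?thesis
  proof (intro allI impI conjI)
    fix t assume tt: "t \<le> \<tau>"
    show "x t \<le> sqrt (2/M)" using x_bound[OF tt] X_def by simp
    have "L * x t \<le> L * X" using x_bound[OF tt] L_pos by simp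
    then show "th t \<le> L * sqrt (2/M)" using cn tt X_def by force
    show "\<bar>u t\<bar> \<le> (beta/2 + K) * (2/M)" using u_abs[OF tt] Q_def by simp
    show "th t \<ge> - (1 + (2 * (2/M) * ((beta/2 + K) * (2/M)) + 1/(2*M)))"
      using th_lo[OF tt] X2 Q_def by simp
  qed
qed


theorem lemma2:
  fixes lam alpha beta L K M :: real
    and x th u :: "real \<Rightarrow> real"
  assumes lam_nn: "lam \<ge> 0" and alpha_pos: "alpha > 0" and beta_pos: "beta > 0"
    and ineq: "alpha * (sqrt (lam\<^sup>2 + 4) + lam) > 2 * (beta - 2)"
    and L_pos: "L > 0" and L_gt: "L > (sqrt (lam\<^sup>2 + 4) - lam) / 2"
    and K_def: "K = beta * L / (alpha + 2 * L)" and K_lt: "K < 1"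
    and M_def: "M = 1 - K" and M_pos: "M > 0"
    and lim_x: "(x \<longlongrightarrow> 0) at_bot"
    and lim_th: "(th \<longlongrightarrow> 0) at_bot"
    and lim_u: "(u \<longlongrightarrow> 0) at_bot"
  shows "\<exists>R>0. \<forall>\<tau>.
     ((\<forall>t\<le>\<tau>. (x has_real_derivative th t) (at t)
          \<and> (th has_real_derivative (- lam * th t - x t * u t + x t - x t ^ 3)) (at t)
          \<and> (u has_real_derivative (- alpha * u t - beta * x t * th t)) (at t))
      \<and> (\<forall>t<\<tau>. x t > 0)
      \<and> (\<forall>t\<le>\<tau>. x t \<ge> 0))
     \<longrightarrow> (\<forall>t\<le>\<tau>. x t \<le> R \<and> \<bar>th t\<bar> \<le> R \<and> \<bar>u t\<bar> \<le> R)"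
proof -
  define R where "R = 1 + sqrt (2/M) + (beta/2 + K) * (2/M) + L * sqrt (2/M)
      + (1 + (2 * (2/M) * ((beta/2 + K) * (2/M)) + 1/(2*M)))"
  have K_nn: "K \<ge> 0" using K_def alpha_pos beta_pos L_pos by simp
  have p1: "sqrt (2/M) \<ge> 0" "(beta/2 + K) * (2/M) \<ge> 0" "L * sqrt (2/M) \<ge> 0"
    "2 * (2/M) * ((beta/2 + K) * (2/M)) + 1/(2*M) \<ge> 0"
    using M_pos K_nn beta_pos L_pos by auto
  have Rpos: "R > 0" unfolding R_def using p1 by linarith
  show ?thesis
  proof (intro exI[of _ R] conjI Rpos allI impI)
    fix \<tau> t assume H: "(\<forall>t\<le>\<tau>. (x has_real_derivative th t) (at t)
          \<and> (th has_real_derivative (- lam * th t - x t * u t + x t - x t ^ 3)) (at t)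
          \<and> (u has_real_derivative (- alpha * u t - beta * x t * th t)) (at t))
      \<and> (\<forall>t<\<tau>. x t > 0)
      \<and> (\<forall>t\<le>\<tau>. x t \<ge> 0)" and tt: "t \<le> \<tau>"
    have B: "\<forall>t\<le>\<tau>. x t \<le> sqrt (2/M) \<and> th t \<le> L * sqrt (2/M)
     \<and> \<bar>u t\<bar> \<le> (beta/2 + K) * (2/M) \<and> th t \<ge> - (1 + (2 * (2/M) * ((beta/2 + K) * (2/M)) + 1/(2*M)))"
      by (rule bounds[OF lam_nn alpha_pos beta_pos L_pos L_gt K_def M_def M_pos lim_x lim_th lim_u])
         (use H in auto)
    then have b: "x t \<le> sqrt (2/M)" "th t \<le> L * sqrt (2/M)" "\<bar>u t\<bar> \<le> (beta/2 + K) * (2/M)"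
      "th t \<ge> - (1 + (2 * (2/M) * ((beta/2 + K) * (2/M)) + 1/(2*M)))" using tt by auto
    show "x t \<le> R" using b p1 unfolding R_def by linarith
    have "th t \<le> R" "- th t \<le> R" using b p1 unfolding R_def by linarith+
    then show "\<bar>th t\<bar> \<le> R" by (simp add: abs_le_iff)
    show "\<bar>u t\<bar> \<le> R" using b p1 unfolding R_def by linarith
  qed
qed

end
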